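(* Let $s$ be a coordinate on $\mathbb{P}^1$ and $$y=-\frac{s(s+1)(s-3)^2}{3(s+3)(s-1)^2},\qquad t=-\left(\frac{(s+1)(s-3)}{(s-1)(s+3)}\right)^3.$$ Then, using $t$ as a local coordinate away from its critical points, $y(t)$ is a solution of $\mathrm{P}_{\mathrm{VI}}$ with parameters $(\theta_1,\theta_2,\theta_3,\theta_4)=(1/2,1/3,1/3,1/2)$.
   Context: $\mathrm{P}_{\mathrm{VI}}$ is the equation $$\frac{d^2y}{dt^2}=\frac12\Big(\frac1y+\frac1{y-1}+\frac1{y-t}\Big)\Big(\frac{dy}{dt}\Big)^2-\Big(\frac1t+\frac1{t-1}+\frac1{y-t}\Big)\frac{dy}{dt}+\frac{y(y-1)(y-t)}{t^2(t-1)^2}\Big(\alpha+\beta\frac{t}{y^2}+\gamma\frac{t-1}{(y-1)^2}+\delta\frac{t(t-1)}{(y-t)^2}\Big),$$ with $\alpha=(\theta_4-1)^2/2$, $\beta=-\theta_1^2/2$, $\gamma=\theta_3^2/2$, $\delta=(1-\theta_2^2)/2$. When $y,t$ are given as rational functions of a parameter on a curve, derivatives with respect to $t$ are computed via the chain rule. *)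

theory Defs
  imports "HOL-Analysis.Analysis"
begin

definition PVI_alpha :: "complex \<Rightarrow> complex" where "PVI_alpha th4 = (th4 - 1)^2 / 2"
definition PVI_beta :: "complex \<Rightarrow> complex" where "PVI_beta th1 = - (th1^2) / 2"
definition PVI_gamma :: "complex \<Rightarrow> complex" where "PVI_gamma th3 = th3^2 / 2"
definition PVI_delta :: "complex \<Rightarrow> complex" where "PVI_delta th2 = (1 - th2^2) / 2"

definition PVI_rhs ::
  "complex \<Rightarrow> complex \<Rightarrow> complex \<Rightarrow> complex \<Rightarrow> complex \<Rightarrow> complex \<Rightarrow> complex \<Rightarrow> complex" where
  "PVI_rhs th1 th2 th3 th4 t y y1 =
     (1/2) * (1/y + 1/(y - 1) + 1/(y - t)) * y1^2
     - (1/t + 1/(t - 1) + 1/(y - t)) * y1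
     + (y * (y - 1) * (y - t)) / (t^2 * (t - 1)^2) *
       (PVI_alpha th4 + PVI_beta th1 * t / y^2 + PVI_gamma th3 * (t - 1) / (y - 1)^2
        + PVI_delta th2 * t * (t - 1) / (y - t)^2)"

definition ysol :: "complex \<Rightarrow> complex" where
  "ysol s = - (s * (s + 1) * (s - 3)^2) / (3 * (s + 3) * (s - 1)^2)"

definition tsol :: "complex \<Rightarrow> complex" where
  "tsol s = - ((((s + 1) * (s - 3)) / ((s - 1) * (s + 3)))^3)"

text \<open>Derivatives with respect to t along the curve, via the chain rule.\<close>
definition dy_dt :: "complex \<Rightarrow> complex" where
  "dy_dt s = deriv ysol s / deriv tsol s"

definition d2y_dt2 :: "complex \<Rightarrow> complex" where
  "d2y_dt2 s = deriv dy_dt s / deriv tsol s"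

end

theory Submission
  imports Defs
begin


definition Y1 :: "complex \<Rightarrow> complex" where
  "Y1 z = -(z-3)*(z^4+6*z^3-2*z^2+18*z+9)/(3*(z+3)^2*(z-1)^3)"
definition T1 :: "complex \<Rightarrow> complex" where
  "T1 z = -12*((z+1)*(z-3))^2*(z^2+3)/((z-1)*(z+3))^4"
definition Gn :: "complex \<Rightarrow> complex" where
  "Gn z = -81 - 135*z + 117*z^2 + 39*z^3 + 17*z^4 + 31*z^5 + 11*z^6 + z^7"
definition Gn1 :: "complex \<Rightarrow> complex" where
  "Gn1 z = -135 + 234*z + 117*z^2 + 68*z^3 + 155*z^4 + 66*z^5 + 7*z^6"
definition Gd :: "complex \<Rightarrow> complex" where
  "Gd z = -324 - 540*z - 216*z^2 - 72*z^3 - 36*z^4 + 36*z^5"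
definition Gd1 :: "complex \<Rightarrow> complex" where
  "Gd1 z = -540 - 432*z - 216*z^2 - 144*z^3 + 180*z^4"

lemma Gd_fact: "Gd z = 36*(z+1)^2*(z-3)*(z^2+3)"
  unfolding Gd_def by algebra
lemma Gn_fact: "Gn z = (z^4+6*z^3-2*z^2+18*z+9)*(z-1)*(z+3)^2"
  unfolding Gn_def by algebra

lemma Gn_deriv: "(Gn has_field_derivative Gn1 z) (at z)"
  unfolding Gn_def[abs_def] Gn1_def
  by (rule derivative_eq_intros refl | simp)+
lemma Gd_deriv: "(Gd has_field_derivative Gd1 z) (at z)"
  unfolding Gd_def[abs_def] Gd1_def
  by (rule derivative_eq_intros refl | simp)+

definition G :: "complex \<Rightarrow> complex" where "G z = Gn z / Gd z"
definition G1 :: "complex \<Rightarrow> complex" where "G1 z = (Gn1 z * Gd z - Gn z * Gd1 z) / (Gd z * Gd z)"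

lemma G_deriv: assumes "Gd z \<noteq> 0" shows "(G has_field_derivative G1 z) (at z)"
  unfolding G_def[abs_def] G1_def by (rule DERIV_divide[OF Gn_deriv Gd_deriv assms])

definition PP :: "complex \<Rightarrow> complex \<Rightarrow> complex \<Rightarrow> complex \<Rightarrow> complex" where
  "PP t y y1 y2 = 2*(y*(y-1)*(y-t))*(t^2*(t-1)^2) * y2
     - y1^2 * (t^2*(t-1)^2) * ((y-1)*(y-t) + y*(y-t) + y*(y-1))
     + 2*(y*(y-1))*(t*(t-1))*(((t-1)+t)*(y-t) + t*(t-1))*y1
     - 2*((1/8)*(y*(y-1)*(y-t))^2 + (-1/8)*t*((y-1)*(y-t))^2 + (1/18)*(t-1)*(y*(y-t))^2
          + (4/9)*t*(t-1)*(y*(y-1))^2)"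

lemma sqc: "(a::complex) \<noteq> 0 \<Longrightarrow> (a*X)^2*(c/a^2) = c*X^2"
  by (simp add: power_mult_distrib)

lemma KPT: "(T::complex) \<noteq> 0 \<Longrightarrow> (2*P*T)*(P/T*S) = 2*P^2*S"
  by (simp add: power2_eq_square)

lemma PP_imp:
  fixes t y y1 y2 :: complex
  assumes "y \<noteq> 0" "y \<noteq> 1" "y \<noteq> t" "t \<noteq> 0" "t \<noteq> 1" "PP t y y1 y2 = 0"
  shows "y2 = PVI_rhs (1/2) (1/3) (1/3) (1/2) t y y1"
proof -
  have a: "y - 1 \<noteq> 0" "y - t \<noteq> 0" "t - 1 \<noteq> 0" using assms by auto
  define P where "P = y*(y-1)*(y-t)"
  define T where "T = t^2*(t-1)^2"
  have P0: "P \<noteq> 0" unfolding P_def using assms a by simp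
  have T0: "T \<noteq> 0" unfolding T_def using assms a by simp
  define K where "K = 2*P*T"
  have L: "\<And>A B C. K*(y2 - (A - B + C)) = K*y2 - K*A + K*B - K*C"
    by (simp add: algebra_simps)
  have e0: "K*(y2 - PVI_rhs (1/2) (1/3) (1/3) (1/2) t y y1)
     = K*y2 - K*((1/2) * (1/y + 1/(y - 1) + 1/(y - t)) * y1^2)
       + K*((1/t + 1/(t - 1) + 1/(y - t)) * y1)
       - K*((y * (y - 1) * (y - t)) / (t^2 * (t - 1)^2) *
       (PVI_alpha (1/2) + PVI_beta (1/2) * t / y^2 + PVI_gamma (1/3) * (t - 1) / (y - 1)^2
        + PVI_delta (1/3) * t * (t - 1) / (y - t)^2))"
    unfolding PVI_rhs_def by (rule L)
  have f1: "1/y + 1/(y - 1) + 1/(y - t) = ((y-1)*(y-t) + y*(y-t) + y*(y-1)) / P"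
    unfolding P_def using assms a by (simp add: field_simps)
  have e1: "K*((1/2) * (1/y + 1/(y - 1) + 1/(y - t)) * y1^2)
      = y1^2 * T * ((y-1)*(y-t) + y*(y-t) + y*(y-1))"
    unfolding f1 K_def using P0 by (simp add: field_simps)
  have f2: "1/t + 1/(t - 1) + 1/(y - t) = (((t-1)+t)*(y-t) + t*(t-1)) / (t*(t-1)*(y-t))"
    using assms a by (simp add: field_simps)
  have PT: "P*T = (y*(y-1))*(t*(t-1))*(t*(t-1)*(y-t))"
    unfolding P_def T_def by (simp add: power2_eq_square algebra_simps)
  have e2: "K*((1/t + 1/(t - 1) + 1/(y - t)) * y1)
      = 2*(y*(y-1))*(t*(t-1))*(((t-1)+t)*(y-t) + t*(t-1))*y1"
  proof -
    have D0: "t*(t-1)*(y-t) \<noteq> 0" using assms a by simp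
    have "K = 2*(y*(y-1))*(t*(t-1))*(t*(t-1)*(y-t))" unfolding K_def using PT by (simp add: mult.assoc)
    then show ?thesis unfolding f2 using D0 by simp
  qed
  have S: "P^2 * (al + be * t / y^2 + ga * (t - 1) / (y - 1)^2 + de * t * (t - 1) / (y - t)^2)
     = al*P^2 + be*t*((y-1)*(y-t))^2 + ga*(t-1)*(y*(y-t))^2 + de*t*(t-1)*(y*(y-1))^2"
    for al be ga de
  proof -
    have p1: "P = y*((y-1)*(y-t))" "P = (y-1)*(y*(y-t))" "P = (y-t)*(y*(y-1))"
      unfolding P_def by (simp_all add: algebra_simps)
    have "P^2 * (be * t / y^2) = be*t*((y-1)*(y-t))^2"
      using sqc[OF assms(1), of "(y-1)*(y-t)" "be*t"] p1(1) by simp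
    moreover have "P^2 * (ga * (t - 1) / (y - 1)^2) = ga*(t-1)*(y*(y-t))^2"
      using sqc[OF a(1), of "y*(y-t)" "ga*(t-1)"] p1(2) by simp
    moreover have "P^2 * (de * t * (t - 1) / (y - t)^2) = de*t*(t-1)*(y*(y-1))^2"
      using sqc[OF a(2), of "y*(y-1)" "de*t*(t-1)"] p1(3) by simp
    ultimately show ?thesis by (simp add: distrib_left)
  qed
  have e3: "K*((y * (y - 1) * (y - t)) / (t^2 * (t - 1)^2) *
       (PVI_alpha (1/2) + PVI_beta (1/2) * t / y^2 + PVI_gamma (1/3) * (t - 1) / (y - 1)^2
        + PVI_delta (1/3) * t * (t - 1) / (y - t)^2))
      = 2*((1/8)*P^2 + (-1/8)*t*((y-1)*(y-t))^2 + (1/18)*(t-1)*(y*(y-t))^2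
          + (4/9)*t*(t-1)*(y*(y-1))^2)"
  proof -
    have "K*((y * (y - 1) * (y - t)) / (t^2 * (t - 1)^2) *
       (PVI_alpha (1/2) + PVI_beta (1/2) * t / y^2 + PVI_gamma (1/3) * (t - 1) / (y - 1)^2
        + PVI_delta (1/3) * t * (t - 1) / (y - t)^2))
      = 2*(P^2*(PVI_alpha (1/2) + PVI_beta (1/2) * t / y^2 + PVI_gamma (1/3) * (t - 1) / (y - 1)^2
        + PVI_delta (1/3) * t * (t - 1) / (y - t)^2))"
      unfolding K_def P_def[symmetric] T_def[symmetric] KPT[OF T0] by (simp only: mult.assoc)
    also have "\<dots> = 2*(PVI_alpha (1/2)*P^2 + PVI_beta (1/2)*t*((y-1)*(y-t))^2
        + PVI_gamma (1/3)*(t-1)*(y*(y-t))^2 + PVI_delta (1/3)*t*(t-1)*(y*(y-1))^2)"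
      by (simp only: S)
    also have "\<dots> = 2*((1/8)*P^2 + (-1/8)*t*((y-1)*(y-t))^2 + (1/18)*(t-1)*(y*(y-t))^2
          + (4/9)*t*(t-1)*(y*(y-1))^2)"
    proof -
      have "PVI_alpha (1/2) = 1/8" "PVI_beta (1/2) = -1/8" "PVI_gamma (1/3) = 1/18" "PVI_delta (1/3) = 4/9"
        by (simp_all add: PVI_alpha_def PVI_beta_def PVI_gamma_def PVI_delta_def power2_eq_square)
      then show ?thesis by (simp only:)
    qed
    finally show ?thesis .
  qed
  have "K*(y2 - PVI_rhs (1/2) (1/3) (1/3) (1/2) t y y1) = PP t y y1 y2"
    unfolding e0 e1 e2 e3 unfolding PP_def K_def P_def[symmetric] T_def[symmetric] by simp
  then have "K*(y2 - PVI_rhs (1/2) (1/3) (1/3) (1/2) t y y1) = 0"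
    using assms by simp
  then show ?thesis using P0 T0 unfolding K_def by simp
qed



lemma PP_generic:
  fixes mo pt po mt r x u q w ga gb t y a b :: complex
  assumes nz: "mo \<noteq> 0" "pt \<noteq> 0" "po \<noteq> 0" "mt \<noteq> 0" "r \<noteq> 0"
    and hY: "y = (-1/3)*x*po*mt^2/(mo^2*pt)"
    and hU: "y - 1 = (-1/3)*r*u/(mo^2*pt)"
    and hV: "y - t = (-(po*mt^2*r*q))/(3*mo^3*pt^3)"
    and hT: "t = -(po^3*mt^3)/(mo^3*pt^3)"
    and hW: "t - 1 = -2*r^2*w/(mo^3*pt^3)"
    and ha: "a = (1/36)*mo*pt^2*ga/(po^2*mt*r)"
    and hb: "b = (-1/216)*x*mo^4*pt^5*gb/(po^5*mt^4*r^3)"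
  shows "PP t y a b = po^3*mt^6*r^3/(mo^15*pt^12) * (
 (1/729) * (u * q * w^2 * gb * x^2) +
 (-1/2916) * (ga^2 * w^2 * u * q * r) +
 (-1/2916) * (ga^2 * w^2 * q * po * mt^2 * x) +
 (-1/2916) * (ga^2 * w^2 * u * mo * pt^2 * x) +
 (2/243) * (u * w^2 * q * ga * r^2 * x) +
 (1/243) * (u * w * q * ga * po^3 * mt^3 * x) +
 (2/81) * (u * w^2 * ga * po^2 * mt * r * x) +
 (-1/2916) * (u^2 * q^2 * mo * pt^2 * po * mt^2 * r * x^2) +
 (-1/324) * (u^2 * q^2 * mo^2 * pt * po^2 * mt * r) +
 (2/729) * (w * q^2 * mo^2 * pt * po * mt^2 * r * x^2) +
 (-16/729) * (w * u^2 * mo * pt^2 * po^2 * mt * r * x^2))"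
  unfolding PP_def unfolding hU hV hW unfolding hY hT ha hb
  using nz by (simp add: field_simps) algebra

lemma blocks:
  fixes x :: complex
  assumes m1: "x - 1 \<noteq> 0" and p3: "x + 3 \<noteq> 0"
  shows "ysol x = (-1/3)*x*(x+1)*(x-3)^2/((x-1)^2*(x+3))"
    and "ysol x - 1 = (-1/3)*(x^2+3)*(x^2-2*x+3)/((x-1)^2*(x+3))"
    and "ysol x - tsol x = (-((x+1)*(x-3)^2*(x^2+3)*(x^2+2*x+3)))/(3*(x-1)^3*(x+3)^3)"
    and "tsol x = -((x+1)^3*(x-3)^3)/((x-1)^3*(x+3)^3)"
    and "tsol x - 1 = -2*(x^2+3)^2*(x^2-3)/((x-1)^3*(x+3)^3)"
proof -
  have d1: "3*(x+3)*(x-1)^2 \<noteq> 0" "((x-1)*(x+3))^3 \<noteq> 0" "(x-1)^2*(x+3) \<noteq> 0"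
    "(x-1)^3*(x+3)^3 \<noteq> 0" "3*(x-1)^3*(x+3)^3 \<noteq> 0" using m1 p3 by (simp_all only: mult_eq_0_iff power_eq_0_iff; simp)+
  have Y: "ysol x = (-(x*(x+1)*(x-3)^2))/(3*(x+3)*(x-1)^2)" by (simp add: ysol_def)
  have T: "tsol x = (-(((x+1)*(x-3))^3))/(((x-1)*(x+3))^3)" by (simp add: tsol_def power_divide)
  show "ysol x = (-1/3)*x*(x+1)*(x-3)^2/((x-1)^2*(x+3))"
    unfolding Y by (subst frac_eq_eq, rule d1, rule d1, algebra)
  show "tsol x = -((x+1)^3*(x-3)^3)/((x-1)^3*(x+3)^3)"
    unfolding T by (subst frac_eq_eq, rule d1, rule d1, algebra)
  show "ysol x - 1 = (-1/3)*(x^2+3)*(x^2-2*x+3)/((x-1)^2*(x+3))"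
    unfolding Y by (subst divide_diff_eq_iff, rule d1, subst frac_eq_eq, rule d1, rule d1, algebra)
  show "tsol x - 1 = -2*(x^2+3)^2*(x^2-3)/((x-1)^3*(x+3)^3)"
    unfolding T by (subst divide_diff_eq_iff, rule d1, subst frac_eq_eq, rule d1, rule d1, algebra)
  have d2: "3*(x+3)*(x-1)^2 * ((x-1)*(x+3))^3 \<noteq> 0" using d1 by (simp only: mult_eq_0_iff de_Morgan_disj) simp
  show "ysol x - tsol x = (-((x+1)*(x-3)^2*(x^2+3)*(x^2+2*x+3)))/(3*(x-1)^3*(x+3)^3)"
    unfolding Y T by (subst diff_frac_eq, rule d1, rule d1, subst frac_eq_eq, rule d2, rule d1(5), algebra)
qed

lemma sum_zero:
  fixes x :: complex
  shows "let m1 = x - 1; p3 = x + 3; p1 = x + 1; m3 = x - 3; r = x^2 + 3; u = x^2-2*x+3;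
    q = x^2+2*x+3; w = x^2 - 3; ga = x^4+6*x^3-2*x^2+18*x+9; gb = x^8-18*x^6-224*x^4-270*x^2-513 in
 (1/729) * (u * q * w^2 * gb * x^2) +
 (-1/2916) * (ga^2 * w^2 * u * q * r) +
 (-1/2916) * (ga^2 * w^2 * q * p1 * m3^2 * x) +
 (-1/2916) * (ga^2 * w^2 * u * m1 * p3^2 * x) +
 (2/243) * (u * w^2 * q * ga * r^2 * x) +
 (1/243) * (u * w * q * ga * p1^3 * m3^3 * x) +
 (2/81) * (u * w^2 * ga * p1^2 * m3 * r * x) +
 (-1/2916) * (u^2 * q^2 * m1 * p3^2 * p1 * m3^2 * r * x^2) +
 (-1/324) * (u^2 * q^2 * m1^2 * p3 * p1^2 * m3 * r) +
 (2/729) * (w * q^2 * m1^2 * p3 * p1 * m3^2 * r * x^2) +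
 (-16/729) * (w * u^2 * m1 * p3^2 * p1^2 * m3 * r * x^2) = 0"
  unfolding Let_def by algebra

lemma a_block:
  fixes x :: complex
  assumes "Gd x \<noteq> 0"
  shows "G x = (1/36)*(x-1)*(x+3)^2*(x^4+6*x^3-2*x^2+18*x+9)/((x+1)^2*(x-3)*(x^2+3))"
  using assms unfolding G_def Gn_fact Gd_fact by (simp add: field_simps)

lemma Fnum: "Gn1 x * Gd x - Gn x * Gd1 x = 72*x*(x+1)*(x+3)*(x^8-18*x^6-224*x^4-270*x^2-513)"
  unfolding Gn1_def Gd_def Gn_def Gd1_def by algebra

lemma b_block:
  fixes x :: complex
  assumes "Gd x \<noteq> 0" "x - 1 \<noteq> 0" "x + 3 \<noteq> 0" "T1 x \<noteq> 0"
  shows "G1 x / T1 x = (-1/216)*x*(x-1)^4*(x+3)^5*(x^8-18*x^6-224*x^4-270*x^2-513)/((x+1)^5*(x-3)^4*(x^2+3)^3)"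
proof -
  have "Gd x = 36*(x+1)^2*(x-3)*(x^2+3)" by (rule Gd_fact)
  then have nz: "x + 1 \<noteq> 0" "x - 3 \<noteq> 0" "x^2+3 \<noteq> 0" using assms by auto
  have d: "36*(x+1)^2*(x-3)*(x^2+3) * (36*(x+1)^2*(x-3)*(x^2+3)) * (-12*((x+1)*(x-3))^2*(x^2+3)) \<noteq> 0"
    "(x+1)^5*(x-3)^4*(x^2+3)^3 \<noteq> 0"
    using nz assms(2,3) by (simp_all only: mult_eq_0_iff power_eq_0_iff de_Morgan_disj; simp)+
  show ?thesis unfolding G1_def T1_def Fnum unfolding Gd_fact
    apply (subst divide_divide_times_eq)
    apply (subst frac_eq_eq, rule d(1), rule d(2))
    apply algebra
    done
qed

lemma nzlin: "(x::complex) \<noteq> -3 \<Longrightarrow> x + 3 \<noteq> 0" "(x::complex) \<noteq> -1 \<Longrightarrow> x + 1 \<noteq> 0"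
  using add_eq_0_iff2[of x 3] add_eq_0_iff2[of x 1] by auto

lemma yf_deriv: fixes z :: complex shows "((\<lambda>s. - (s * (s + 1) * (s - 3)^2)) has_field_derivative (-(4*z^3 - 15*z^2 + 6*z + 9))) (at z)"
proof -
  have e: "(\<lambda>s::complex. - (s * (s + 1) * (s - 3)^2)) = (\<lambda>s. -(s^4 - 5* s^3 + 3* s^2 + 9* s))"
    by (rule ext) algebra
  show ?thesis unfolding e by (rule derivative_eq_intros refl | simp)+
qed

lemma yg_deriv: fixes z :: complex shows "((\<lambda>s. 3 * (s + 3) * (s - 1)^2) has_field_derivative (9*z^2 + 6*z - 15)) (at z)"
proof -
  have e: "(\<lambda>s::complex. 3 * (s + 3) * (s - 1)^2) = (\<lambda>s. 3* s^3 + 3* s^2 - 15* s + 9)"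
    by (rule ext) algebra
  show ?thesis unfolding e by (rule derivative_eq_intros refl | simp)+
qed

lemma ysol_deriv: assumes "z \<noteq> 1" "z \<noteq> -3" shows "(ysol has_field_derivative Y1 z) (at z)"
proof -
  have a: "z - 1 \<noteq> 0" "z + 3 \<noteq> 0" using assms nzlin by auto
  have g0: "3 * (z + 3) * (z - 1)^2 \<noteq> 0" using a by (simp only: mult_eq_0_iff power_eq_0_iff de_Morgan_disj; simp)
  have D: "(ysol has_field_derivative
     ((-(4*z^3 - 15*z^2 + 6*z + 9)) * (3 * (z + 3) * (z - 1)^2) - (- (z * (z + 1) * (z - 3)^2)) * (9*z^2 + 6*z - 15))
      / ((3 * (z + 3) * (z - 1)^2) * (3 * (z + 3) * (z - 1)^2))) (at z)"
    unfolding ysol_def[abs_def] by (rule DERIV_divide[OF yf_deriv yg_deriv g0])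
  have d2: "(3 * (z + 3) * (z - 1)^2) * (3 * (z + 3) * (z - 1)^2) \<noteq> 0" "3*(z+3)^2*(z-1)^3 \<noteq> 0"
    using a by (simp_all only: mult_eq_0_iff power_eq_0_iff de_Morgan_disj; simp)+
  have "((-(4*z^3 - 15*z^2 + 6*z + 9)) * (3 * (z + 3) * (z - 1)^2) - (- (z * (z + 1) * (z - 3)^2)) * (9*z^2 + 6*z - 15))
      / ((3 * (z + 3) * (z - 1)^2) * (3 * (z + 3) * (z - 1)^2)) = Y1 z"
    unfolding Y1_def by (subst frac_eq_eq, rule d2(1), rule d2(2), algebra)
  with D show ?thesis by simp
qed

lemma tf_deriv: fixes z :: complex shows "((\<lambda>s. - (((s + 1) * (s - 3))^3)) has_field_derivative (-(3*((z + 1) * (z - 3))^2 * (2*z - 2)))) (at z)"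
  by (rule derivative_eq_intros refl | simp)+

lemma tg_deriv: fixes z :: complex shows "((\<lambda>s. ((s - 1) * (s + 3))^3) has_field_derivative (3*((z - 1) * (z + 3))^2 * (2*z + 2))) (at z)"
  by (rule derivative_eq_intros refl | simp)+

lemma tsol_deriv: assumes "z \<noteq> 1" "z \<noteq> -3" shows "(tsol has_field_derivative T1 z) (at z)"
proof -
  have a: "z - 1 \<noteq> 0" "z + 3 \<noteq> 0" using assms nzlin by auto
  have e: "tsol = (\<lambda>s. (- (((s + 1) * (s - 3))^3)) / (((s - 1) * (s + 3))^3))"
    unfolding tsol_def[abs_def] by (rule ext) (simp add: power_divide)
  have g0: "((z - 1) * (z + 3))^3 \<noteq> 0" using a by simp
  have D: "(tsol has_field_derivative
     ((-(3*((z + 1) * (z - 3))^2 * (2*z - 2))) * ((z - 1) * (z + 3))^3 - (- (((z + 1) * (z - 3))^3)) * (3*((z - 1) * (z + 3))^2 * (2*z + 2)))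
      / (((z - 1) * (z + 3))^3 * ((z - 1) * (z + 3))^3)) (at z)"
    unfolding e by (rule DERIV_divide[OF tf_deriv tg_deriv g0])
  have d2: "((z - 1) * (z + 3))^3 * ((z - 1) * (z + 3))^3 \<noteq> 0" "((z-1)*(z+3))^4 \<noteq> 0"
    using a by simp_all
  have "((-(3*((z + 1) * (z - 3))^2 * (2*z - 2))) * ((z - 1) * (z + 3))^3 - (- (((z + 1) * (z - 3))^3)) * (3*((z - 1) * (z + 3))^2 * (2*z + 2)))
      / (((z - 1) * (z + 3))^3 * ((z - 1) * (z + 3))^3) = T1 z"
    unfolding T1_def by (subst frac_eq_eq, rule d2(1), rule d2(2), algebra)
  with D show ?thesis by simp
qed


lemma T1_cont: assumes "z \<noteq> 1" "z \<noteq> -3" shows "isCont T1 z"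
proof -
  have a: "z - 1 \<noteq> 0" "z + 3 \<noteq> 0" using assms nzlin by auto
  show ?thesis unfolding T1_def[abs_def] using a by (intro continuous_intros) auto
qed

lemma T1_nz:
  assumes "z - 1 \<noteq> 0" "z + 3 \<noteq> 0" "T1 z \<noteq> 0"
  shows "z + 1 \<noteq> 0" "z - 3 \<noteq> 0" "z^2 + 3 \<noteq> 0"
  using assms unfolding T1_def by auto

lemma YT_G:
  fixes z :: complex
  assumes a: "z - 1 \<noteq> 0" "z + 3 \<noteq> 0" "z + 1 \<noteq> 0" "z - 3 \<noteq> 0" "z^2 + 3 \<noteq> 0"
  shows "Y1 z / T1 z = G z"
proof -
  have d: "3*(z+3)^2*(z-1)^3 * (-12*((z+1)*(z-3))^2*(z^2+3)) \<noteq> 0"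
     "36*(z+1)^2*(z-3)*(z^2+3) \<noteq> 0" "((z-1)*(z+3))^4 \<noteq> 0"
    using a by (simp_all only: mult_eq_0_iff power_eq_0_iff de_Morgan_disj; simp)+
  show ?thesis unfolding Y1_def T1_def G_def Gn_fact Gd_fact
    apply (subst divide_divide_times_eq)
    apply (subst frac_eq_eq, rule d(1), rule d(2))
    apply algebra
    done
qed

lemma final_id:
  fixes s :: complex
  assumes a: "s - 1 \<noteq> 0" "s + 3 \<noteq> 0" "s + 1 \<noteq> 0" "s - 3 \<noteq> 0" "s^2 + 3 \<noteq> 0"
    and "T1 s \<noteq> 0"
    and "tsol s \<noteq> 0" and "tsol s \<noteq> 1"
    and "ysol s \<noteq> 0" and "ysol s \<noteq> 1" and "ysol s \<noteq> tsol s"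
  shows "G1 s / T1 s = PVI_rhs (1/2) (1/3) (1/3) (1/2) (tsol s) (ysol s) (G s)"
proof (rule PP_imp)
  show "ysol s \<noteq> 0" "ysol s \<noteq> 1" "ysol s \<noteq> tsol s" "tsol s \<noteq> 0" "tsol s \<noteq> 1" using assms by auto
  have Gd0: "Gd s \<noteq> 0" unfolding Gd_fact using a by simp
  have "PP (tsol s) (ysol s) (G s) (G1 s / T1 s) = 0"
    apply (subst PP_generic[where mo="s-1" and pt="s+3" and po="s+1" and mt="s-3" and r="s^2+3"
        and x=s and u="s^2-2 * s+3" and q="s^2+2 * s+3" and w="s^2-3"
        and ga="s^4+6 * s^3-2 * s^2+18 * s+9" and gb="s^8-18 * s^6-224 * s^4-270 * s^2-513"])
    using a apply simp_all[5]
    apply (rule blocks(1)[OF a(1,2)])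
    apply (rule blocks(2)[OF a(1,2)])
    apply (rule blocks(3)[OF a(1,2)])
    apply (rule blocks(4)[OF a(1,2)])
    apply (rule blocks(5)[OF a(1,2)])
    apply (rule a_block[OF Gd0])
    apply (rule b_block[OF Gd0 a(1,2) assms(6)])
    by (simp only: sum_zero[of s, unfolded Let_def] mult_zero_right)
  then show "PP (tsol s) (ysol s) (G s) (G1 s / T1 s) = 0" .
qed

lemma ev_T1:
  fixes s :: complex
  assumes "s \<noteq> 1" "s \<noteq> -3" "T1 s \<noteq> 0"
  shows "eventually (\<lambda>z. z \<noteq> 1 \<and> z \<noteq> -3 \<and> T1 z \<noteq> 0) (nhds s)"
proof (intro eventually_conj)
  show "eventually (\<lambda>z. z \<noteq> 1) (nhds s)" using assms(1) by (rule t1_space_nhds)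
  show "eventually (\<lambda>z. z \<noteq> -3) (nhds s)" using assms(2) by (rule t1_space_nhds)
  have "eventually (\<lambda>z. T1 z \<noteq> 0) (at s)"
    using tendsto_imp_eventually_ne[OF T1_cont[OF assms(1,2), unfolded isCont_def] assms(3)] .
  then show "eventually (\<lambda>z. T1 z \<noteq> 0) (nhds s)" using assms(3) by (simp add: eventually_nhds_conv_at)
qed

lemma dy_dt_G:
  fixes z :: complex
  assumes z: "z \<noteq> 1 \<and> z \<noteq> -3 \<and> T1 z \<noteq> 0"
  shows "dy_dt z = G z"
proof -
  have "deriv ysol z = Y1 z" using ysol_deriv z by (intro DERIV_imp_deriv) auto
  moreover have "deriv tsol z = T1 z" using tsol_deriv z by (intro DERIV_imp_deriv) auto
  moreover have za: "z - 1 \<noteq> 0" "z + 3 \<noteq> 0" using z nzlin by auto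
  moreover have "z + 1 \<noteq> 0" "z - 3 \<noteq> 0" "z^2+3 \<noteq> 0" using T1_nz[OF za] z by auto
  ultimately show "dy_dt z = G z" unfolding dy_dt_def using YT_G by simp
qed

lemma ev_dy:
  fixes s :: complex
  assumes "s \<noteq> 1" "s \<noteq> -3" "T1 s \<noteq> 0"
  shows "eventually (\<lambda>z. dy_dt z = G z) (nhds s)"
  using ev_T1[OF assms] by (rule eventually_mono) (rule dy_dt_G)

lemma deriv_dy:
  fixes s :: complex
  assumes "s \<noteq> 1" "s \<noteq> -3" "T1 s \<noteq> 0" "Gd s \<noteq> 0"
  shows "deriv dy_dt s = G1 s"
proof -
  have "deriv dy_dt s = deriv G s" by (rule deriv_cong_ev[OF ev_dy[OF assms(1-3)] refl])
  also have "\<dots> = G1 s" using G_deriv[OF assms(4)] by (rule DERIV_imp_deriv)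
  finally show ?thesis .
qed

theorem mainTheorem5:
  fixes s :: complex
  assumes "s \<noteq> 1" and "s \<noteq> -3"
    and "deriv tsol s \<noteq> 0"
    and "tsol s \<noteq> 0" and "tsol s \<noteq> 1"
    and "ysol s \<noteq> 0" and "ysol s \<noteq> 1" and "ysol s \<noteq> tsol s"
  shows "d2y_dt2 s = PVI_rhs (1/2) (1/3) (1/3) (1/2) (tsol s) (ysol s) (dy_dt s)"
proof -
  have dT: "deriv tsol s = T1 s" using tsol_deriv[OF assms(1,2)] by (rule DERIV_imp_deriv)
  have T1ne: "T1 s \<noteq> 0" using assms(3) dT by simp
  have a: "s - 1 \<noteq> 0" "s + 3 \<noteq> 0" using assms(1,2) nzlin by auto
  have nz: "s + 1 \<noteq> 0" "s - 3 \<noteq> 0" "s^2+3 \<noteq> 0" using T1_nz[OF a T1ne] by auto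
  have Gd0: "Gd s \<noteq> 0" unfolding Gd_fact using nz by simp
  have dd: "deriv dy_dt s = G1 s" by (rule deriv_dy[OF assms(1,2) T1ne Gd0])
  have d2: "d2y_dt2 s = G1 s / T1 s" unfolding d2y_dt2_def dT dd ..
  have d1: "dy_dt s = G s" using assms(1,2) T1ne by (intro dy_dt_G) simp
  show ?thesis unfolding d2 d1 by (rule final_id[OF a nz T1ne assms(4-8)])
qed

end
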